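(* Consider an open quantum system on a finite-dimensional Hilbert space $\mathcal H$ with Hamiltonian $H$ and coupling operators $L_1,\dots,L_K$. Let $V$ be a Lyapunov operator (commuting with $H$) which is a projection, $V^2=V$. If $V$ satisfies Condition DS but does not satisfy Condition ES, then at least one of the coupling operators $L_k$ cannot be written as $L_k=U_kV$ with $U_k$ unitary. In particular, in the single-channel case ($K=1$), the coupling operator $L$ cannot be written as $L=UV$ with $U$ unitary.
   Context: For an observable $X$ commuting with $H$ the generator is $\mathcal G(X)=\sum_{k=1}^K\big(L_k^\dagger XL_k-\tfrac12L_k^\dagger L_kX-\tfrac12XL_k^\dagger L_k\big)$ (the system density evolves by $\dot\rho=-i[H,\rho]+\sum_k(L_k\rho L_k^\dagger-\tfrac12L_k^\dagger L_k\rho-\tfrac12\rho L_k^\dagger L_k)$). A Lyapunov operator is a self-adjoint $V\ge0$ with smallest eigenvalue $0$ and $\mathcal G(V)\le0$. Dissipation functional: $\mathfrak D(X)=\mathcal G(X^\dagger X)-\mathcal G(X^\dagger)X-X^\dagger\mathcal G(X)$. Condition ES: $\mathcal G(V)\le-cV$ for some $c>0$. Condition DS: $\mathcal G(V)\le0$ and $cV\le\mathfrak D(V)$ for some $c>0$. *)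

theory Defs
  imports "Jordan_Normal_Form.Schur_Decomposition" "Jordan_Normal_Form.Char_Poly"
begin

definition hermitian_mat :: "nat \<Rightarrow> complex mat \<Rightarrow> bool" where
  "hermitian_mat n A \<longleftrightarrow> A \<in> carrier_mat n n \<and> mat_adjoint A = A"

definition unitary_mat :: "nat \<Rightarrow> complex mat \<Rightarrow> bool" where
  "unitary_mat n U \<longleftrightarrow> U \<in> carrier_mat n n \<and>
     mat_adjoint U * U = 1\<^sub>m n \<and> U * mat_adjoint U = 1\<^sub>m n"

definition psd_mat :: "nat \<Rightarrow> complex mat \<Rightarrow> bool" where
  "psd_mat n A \<longleftrightarrow> A \<in> carrier_mat n n \<and>
     (\<forall>v \<in> carrier_vec n. Im ((A *\<^sub>v v) \<bullet>c v) = 0 \<and> 0 \<le> Re ((A *\<^sub>v v) \<bullet>c v))"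

definition loewner_le :: "nat \<Rightarrow> complex mat \<Rightarrow> complex mat \<Rightarrow> bool" where
  "loewner_le n A B \<longleftrightarrow> A \<in> carrier_mat n n \<and> B \<in> carrier_mat n n \<and> psd_mat n (B - A)"

fun msum :: "nat \<Rightarrow> (nat \<Rightarrow> complex mat) \<Rightarrow> nat \<Rightarrow> complex mat" where
  "msum n f 0 = 0\<^sub>m n n"
| "msum n f (Suc k) = msum n f k + f k"

text \<open>Heisenberg-picture generator (dissipative part) for K channels L 0, ..., L (K-1).\<close>
definition gen :: "nat \<Rightarrow> (nat \<Rightarrow> complex mat) \<Rightarrow> nat \<Rightarrow> complex mat \<Rightarrow> complex mat" where
  "gen n L K X = msum n (\<lambda>k. mat_adjoint (L k) * X * L k
       - (1/2 :: complex) \<cdot>\<^sub>m (mat_adjoint (L k) * L k * X)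
       - (1/2 :: complex) \<cdot>\<^sub>m (X * (mat_adjoint (L k) * L k))) K"

definition dissip :: "nat \<Rightarrow> (nat \<Rightarrow> complex mat) \<Rightarrow> nat \<Rightarrow> complex mat \<Rightarrow> complex mat" where
  "dissip n L K X = gen n L K (mat_adjoint X * X) - gen n L K (mat_adjoint X) * X
                    - mat_adjoint X * gen n L K X"

definition lyapunov_op :: "nat \<Rightarrow> (nat \<Rightarrow> complex mat) \<Rightarrow> nat \<Rightarrow> complex mat \<Rightarrow> bool" where
  "lyapunov_op n L K V \<longleftrightarrow> hermitian_mat n V \<and> psd_mat n V \<and> eigenvalue V 0 \<and>
     loewner_le n (gen n L K V) (0\<^sub>m n n)"

definition cond_ES :: "nat \<Rightarrow> (nat \<Rightarrow> complex mat) \<Rightarrow> nat \<Rightarrow> complex mat \<Rightarrow> bool" where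
  "cond_ES n L K V \<longleftrightarrow> (\<exists>c::real. c > 0 \<and>
     loewner_le n (gen n L K V) ((- complex_of_real c) \<cdot>\<^sub>m V))"

definition cond_DS :: "nat \<Rightarrow> (nat \<Rightarrow> complex mat) \<Rightarrow> nat \<Rightarrow> complex mat \<Rightarrow> bool" where
  "cond_DS n L K V \<longleftrightarrow> loewner_le n (gen n L K V) (0\<^sub>m n n) \<and>
     (\<exists>c::real. c > 0 \<and> loewner_le n (complex_of_real c \<cdot>\<^sub>m V) (dissip n L K V))"

end

theory Submission imports Defs begin
lemma adj_index: "i < dim_col A \<Longrightarrow> j < dim_row A \<Longrightarrow> mat_adjoint A $$ (i,j) = conjugate (A $$ (j,i))"
  and adj_dim: "dim_row (mat_adjoint A) = dim_col A" "dim_col (mat_adjoint A) = dim_row A"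
  unfolding mat_adjoint_def by (auto simp: mat_of_rows_def)
lemma adj_mult: assumes "A \<in> carrier_mat n n" "B \<in> carrier_mat n n"
  shows "mat_adjoint (A * B :: complex mat) = mat_adjoint B * mat_adjoint A"
proof (rule eq_matI)
  fix i j assume ij: "i < dim_row (mat_adjoint B * mat_adjoint A)" "j < dim_col (mat_adjoint B * mat_adjoint A)"
  then have i: "i < n" and j: "j < n" using assms by (auto simp: adj_dim)
  have "mat_adjoint (A * B) $$ (i,j) = conjugate (\<Sum>k<n. A $$ (j,k) * B $$ (k,i))"
    using assms i j by (simp add: adj_index adj_dim scalar_prod_def sum.atLeast0_lessThan_Suc atLeast0LessThan)
  also have "\<dots> = (\<Sum>k<n. conjugate (B $$ (k,i)) * conjugate (A $$ (j,k)))"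
    by (simp add: mult.commute)
  also have "\<dots> = (mat_adjoint B * mat_adjoint A) $$ (i,j)"
    using assms i j by (simp add: adj_index adj_dim scalar_prod_def atLeast0LessThan)
  finally show "mat_adjoint (A * B) $$ (i, j) = (mat_adjoint B * mat_adjoint A) $$ (i, j)" .
qed (use assms in \<open>auto simp: adj_dim\<close>)

lemma msum_props:
  assumes "\<forall>k<K. f k \<in> carrier_mat n n \<and> f k * V = f k \<and> V * f k = f k" "V \<in> carrier_mat n n"
  shows "msum n f K \<in> carrier_mat n n \<and> msum n f K * V = msum n f K \<and> V * msum n f K = msum n f K"
  using assms
proof (induction K)
  case 0 then show ?case by auto
next
  case (Suc K)
  then have IH: "msum n f K \<in> carrier_mat n n" "msum n f K * V = msum n f K" "V * msum n f K = msum n f K"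
    and fk: "f K \<in> carrier_mat n n" "f K * V = f K" "V * f K = f K" by auto
  have c: "msum n f (Suc K) \<in> carrier_mat n n" using IH fk by simp
  have r: "msum n f (Suc K) * V = msum n f (Suc K)"
    unfolding msum.simps add_mult_distrib_mat[OF IH(1) fk(1) Suc.prems(2)] IH(2) fk(2) ..
  have l: "V * msum n f (Suc K) = msum n f (Suc K)"
    unfolding msum.simps mult_add_distrib_mat[OF Suc.prems(2) IH(1) fk(1)] IH(3) fk(3) ..
  show ?case using c r l by blast
qed

lemma term_props:
  fixes U V :: "complex mat"
  assumes U: "U \<in> carrier_mat n n" and V: "V \<in> carrier_mat n n" and VV: "V * V = V"
    and Vh: "mat_adjoint V = V"
  defines "L \<equiv> U * V"
  shows "(mat_adjoint L * V * L - (1/2 :: complex) \<cdot>\<^sub>m (mat_adjoint L * L * V)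
       - (1/2 :: complex) \<cdot>\<^sub>m (V * (mat_adjoint L * L))) \<in> carrier_mat n n \<and>
     (mat_adjoint L * V * L - (1/2 :: complex) \<cdot>\<^sub>m (mat_adjoint L * L * V)
       - (1/2 :: complex) \<cdot>\<^sub>m (V * (mat_adjoint L * L))) * V =
     (mat_adjoint L * V * L - (1/2 :: complex) \<cdot>\<^sub>m (mat_adjoint L * L * V)
       - (1/2 :: complex) \<cdot>\<^sub>m (V * (mat_adjoint L * L))) \<and>
     V * (mat_adjoint L * V * L - (1/2 :: complex) \<cdot>\<^sub>m (mat_adjoint L * L * V)
       - (1/2 :: complex) \<cdot>\<^sub>m (V * (mat_adjoint L * L))) =
     (mat_adjoint L * V * L - (1/2 :: complex) \<cdot>\<^sub>m (mat_adjoint L * L * V)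
       - (1/2 :: complex) \<cdot>\<^sub>m (V * (mat_adjoint L * L)))"
proof -
  have Lc: "L \<in> carrier_mat n n" using U V by (simp add: L_def)
  have La: "mat_adjoint L \<in> carrier_mat n n"
    by (rule carrier_matI) (use Lc in \<open>simp_all only: adj_dim carrier_mat_def mem_Collect_eq\<close>)
  have LV: "L * V = L" using U V VV by (simp add: L_def)
  have "mat_adjoint (L * V) = mat_adjoint V * mat_adjoint L" by (rule adj_mult[OF Lc V])
  then have VLa: "V * mat_adjoint L = mat_adjoint L" unfolding LV Vh by (rule sym)
  define A where "A = mat_adjoint L"
  have Ac: "A \<in> carrier_mat n n" using La A_def by simp
  have AV: "V * A = A" using VLa A_def by simp
  define P where "P = A * V * L"
  define Q where "Q = A * L * V"
  define R where "R = V * (A * L)"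
  have Pc: "P \<in> carrier_mat n n" and Qc: "Q \<in> carrier_mat n n" and Rc: "R \<in> carrier_mat n n"
    using Ac Lc V by (auto simp: P_def Q_def R_def)
  have PV: "P * V = P" unfolding P_def using Ac Lc V LV by (simp add: assoc_mult_mat[of _ n n _ n _ n])
  have QV: "Q * V = Q" unfolding Q_def using Ac Lc V LV VV by (simp add: assoc_mult_mat[of _ n n _ n _ n])
  have RV: "R * V = R" unfolding R_def using Ac Lc V LV by (simp add: assoc_mult_mat[of _ n n _ n _ n])
  have VAX: "V * (A * X) = A * X" if "X \<in> carrier_mat n n" for X
    by (metis AV Ac V that assoc_mult_mat)
  have VVX: "V * (V * X) = V * X" if "X \<in> carrier_mat n n" for X
    by (metis VV V that assoc_mult_mat)
  have VP: "V * P = P" unfolding P_def using Ac Lc V VAX by simp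
  have VQ: "V * Q = Q" unfolding Q_def using Ac Lc V VAX by simp
  have VR: "V * R = R" unfolding R_def using Ac Lc V VVX by simp
  have T: "mat_adjoint L * V * L - (1/2 :: complex) \<cdot>\<^sub>m (mat_adjoint L * L * V)
       - (1/2 :: complex) \<cdot>\<^sub>m (V * (mat_adjoint L * L)) = P - (1/2::complex) \<cdot>\<^sub>m Q - (1/2::complex) \<cdot>\<^sub>m R"
    by (simp add: P_def Q_def R_def A_def)
  define c :: complex where "c = 1/2"
  have cQ: "c \<cdot>\<^sub>m Q \<in> carrier_mat n n" and cR: "c \<cdot>\<^sub>m R \<in> carrier_mat n n"
    using Qc Rc by auto
  have PQ: "P - c \<cdot>\<^sub>m Q \<in> carrier_mat n n" by (rule minus_carrier_mat[OF cQ])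
  have "(P - c \<cdot>\<^sub>m Q - c \<cdot>\<^sub>m R) * V = P * V - c \<cdot>\<^sub>m (Q * V) - c \<cdot>\<^sub>m (R * V)"
    unfolding minus_mult_distrib_mat[OF PQ cR V] minus_mult_distrib_mat[OF Pc cQ V]
      mult_smult_assoc_mat[OF Qc V] mult_smult_assoc_mat[OF Rc V] ..
  moreover have "V * (P - c \<cdot>\<^sub>m Q - c \<cdot>\<^sub>m R) = V * P - c \<cdot>\<^sub>m (V * Q) - c \<cdot>\<^sub>m (V * R)"
    unfolding mult_minus_distrib_mat[OF V PQ cR] mult_minus_distrib_mat[OF V Pc cQ]
      mult_smult_distrib[OF V Qc] mult_smult_distrib[OF V Rc] ..
  moreover have "P - c \<cdot>\<^sub>m Q - c \<cdot>\<^sub>m R \<in> carrier_mat n n" by (rule minus_carrier_mat[OF cR])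
  ultimately show ?thesis unfolding c_def[symmetric] T[unfolded c_def[symmetric]] using PV QV RV VP VQ VR by simp
qed

theorem corollary24:
  fixes n K :: nat and H V :: "complex mat" and L :: "nat \<Rightarrow> complex mat"
  assumes "hermitian_mat n H"
    and "\<forall>k<K. L k \<in> carrier_mat n n"
    and "lyapunov_op n L K V"
    and "V * H = H * V"
    and "V * V = V"
    and "cond_DS n L K V"
    and "\<not> cond_ES n L K V"
  shows "(\<exists>k<K. \<not> (\<exists>U. unitary_mat n U \<and> L k = U * V))
       \<and> (K = 1 \<longrightarrow> \<not> (\<exists>U. unitary_mat n U \<and> L 0 = U * V))"
proof -
  have Vc: "V \<in> carrier_mat n n" and Vh: "mat_adjoint V = V"
    using assms(3) by (auto simp: lyapunov_op_def hermitian_mat_def)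
  have VV: "V * V = V" by (rule assms(5))
  have False if all: "\<forall>k<K. \<exists>U. unitary_mat n U \<and> L k = U * V"
  proof -
    define f where "f = (\<lambda>k. mat_adjoint (L k) * V * L k
       - (1/2 :: complex) \<cdot>\<^sub>m (mat_adjoint (L k) * L k * V)
       - (1/2 :: complex) \<cdot>\<^sub>m (V * (mat_adjoint (L k) * L k)))"
    have fk: "\<forall>k<K. f k \<in> carrier_mat n n \<and> f k * V = f k \<and> V * f k = f k"
    proof (intro allI impI)
      fix k assume "k < K"
      then obtain U where U: "unitary_mat n U" and Lk: "L k = U * V" using all by blast
      have Uc: "U \<in> carrier_mat n n" using U by (simp add: unitary_mat_def)
      show "f k \<in> carrier_mat n n \<and> f k * V = f k \<and> V * f k = f k"
        unfolding f_def Lk by (rule term_props[OF Uc Vc VV Vh])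
    qed
    define G where "G = gen n L K V"
    have G: "G = msum n f K" unfolding G_def gen_def f_def ..
    have Gc: "G \<in> carrier_mat n n" and GV: "G * V = G" and VG: "V * G = G"
      using msum_props[OF fk Vc] unfolding G[symmetric] by auto
    have D: "dissip n L K V = G - G - G"
      unfolding dissip_def Vh VV G_def[symmetric] GV VG ..
    obtain c :: real where c: "c > 0" and le: "loewner_le n (complex_of_real c \<cdot>\<^sub>m V) (dissip n L K V)"
      using assms(6) by (auto simp: cond_DS_def)
    have eq: "dissip n L K V - complex_of_real c \<cdot>\<^sub>m V = (- complex_of_real c) \<cdot>\<^sub>m V - G"
      unfolding D by (rule eq_matI) (use Gc Vc in auto)
    have "loewner_le n G ((- complex_of_real c) \<cdot>\<^sub>m V)"
      using le Gc Vc unfolding loewner_le_def eq by auto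
    then have "cond_ES n L K V" using c unfolding cond_ES_def G_def by blast
    then show False using assms(7) by blast
  qed
  then have ex: "\<exists>k<K. \<not> (\<exists>U. unitary_mat n U \<and> L k = U * V)" by blast
  moreover have "K = 1 \<longrightarrow> \<not> (\<exists>U. unitary_mat n U \<and> L 0 = U * V)"
    using ex by auto
  ultimately show ?thesis by blast
qed

end
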